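(* Let $K\ge 2$, $i\in[K]$, and let $(G_{ij})_{j\in[K]\setminus\{i\}}$ be integrable real random variables on a probability space, with $G:=\min_{j\ne i}G_{ij}$. Let $L\ge 1$ and let $q\sim\mathrm{Ber}(1/L)$ be independent of $(G_{ij})_j$. Define the event $E=\{G>0\}\cup\{G\le 0,\ q=1\}$. Then for every $j\ne i$, $$\mathbb E[G_{ij}\mathbb 1_E]=\Big(1-\frac1L\Big)\mathbb E[G_{ij}\mathbb 1_{\{G>0\}}]+\frac1L\,\mathbb E[G_{ij}].$$ Moreover, let $\epsilon\in[0,1)$, $\tau,\rho>0$, and suppose $\Pr(G\ge\tau)\ge\rho$ and $\mathbb E[G_{ij}]\ge -1$ for all $j\ne i$. If $$L\ge 1+\frac{1-\epsilon}{\tau\rho+\epsilon},$$ then $\mathbb E[G_{ij}\mathbb 1_E]\ge-\epsilon$ for every $j\neq i$.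
   Context: $\mathrm{Ber}(1/L)$ is the Bernoulli distribution with success probability $1/L$; $\mathbb 1_E$ is the indicator of the event $E$. *)

theory Defs
  imports "HOL-Probability.Probability"
begin

definition idx :: "nat \<Rightarrow> nat \<Rightarrow> nat set" where
  "idx K i = {1..K} - {i}"

definition Gmin :: "nat \<Rightarrow> nat \<Rightarrow> (nat \<Rightarrow> 'a \<Rightarrow> real) \<Rightarrow> 'a \<Rightarrow> real" where
  "Gmin K i G \<omega> = Min ((\<lambda>j. G j \<omega>) ` idx K i)"

definition eventE :: "'a measure \<Rightarrow> nat \<Rightarrow> nat \<Rightarrow> (nat \<Rightarrow> 'a \<Rightarrow> real) \<Rightarrow> ('a \<Rightarrow> bool) \<Rightarrow> 'a set" where
  "eventE M K i G q = {\<omega> \<in> space M. Gmin K i G \<omega> > 0 \<or> (Gmin K i G \<omega> \<le> 0 \<and> q \<omega>)}"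

end

theory Submission
  imports Defs
begin

theorem mainTheorem8:
  fixes M :: "'a measure" and K i :: nat and G :: "nat \<Rightarrow> 'a \<Rightarrow> real"
    and q :: "'a \<Rightarrow> bool" and L :: real
  assumes "prob_space M"
    and "K \<ge> 2" and "i \<in> {1..K}"
    and "\<And>j. j \<in> idx K i \<Longrightarrow> integrable M (G j)"
    and "L \<ge> 1"
    and "q \<in> measurable M (count_space UNIV)"
    and "distr M (count_space UNIV) q = measure_pmf (bernoulli_pmf (1 / L))"
    and "prob_space.indep_set M
           {(\<lambda>\<omega>. restrict (\<lambda>j. G j \<omega>) (idx K i)) -` A \<inter> space M | A. A \<in> sets (PiM (idx K i) (\<lambda>_. borel))}
           {q -` B \<inter> space M | B. B \<in> sets (count_space UNIV)}"
  shows "(\<forall>j \<in> idx K i.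
            prob_space.expectation M (\<lambda>\<omega>. G j \<omega> * indicator (eventE M K i G q) \<omega>)
            = (1 - 1 / L) * prob_space.expectation M
                 (\<lambda>\<omega>. G j \<omega> * indicator {\<omega> \<in> space M. Gmin K i G \<omega> > 0} \<omega>)
              + 1 / L * prob_space.expectation M (G j))
       \<and> (\<forall>\<epsilon> \<tau> \<rho> :: real.
            0 \<le> \<epsilon> \<and> \<epsilon> < 1 \<and> \<tau> > 0 \<and> \<rho> > 0
            \<and> measure M {\<omega> \<in> space M. Gmin K i G \<omega> \<ge> \<tau>} \<ge> \<rho>
            \<and> (\<forall>j \<in> idx K i. prob_space.expectation M (G j) \<ge> -1)
            \<and> L \<ge> 1 + (1 - \<epsilon>) / (\<tau> * \<rho> + \<epsilon>)
            \<longrightarrow> (\<forall>j \<in> idx K i.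
                   prob_space.expectation M (\<lambda>\<omega>. G j \<omega> * indicator (eventE M K i G q) \<omega>) \<ge> - \<epsilon>))"
proof -
  interpret prob_space M by fact
  let ?I = "idx K i"
  have fin: "finite ?I" by (simp add: idx_def)
  have ne: "?I \<noteq> {}"
  proof -
    have "(if i = 1 then 2 else 1) \<in> ?I" using assms(2,3) by (auto simp: idx_def)
    thus ?thesis by blast
  qed
  have Gm: "G k \<in> borel_measurable M" if "k \<in> ?I" for k using assms(4)[OF that] by auto
  define P where "P = {\<omega> \<in> space M. Gmin K i G \<omega> > 0}"
  define S where "S = {\<omega> \<in> space M. Gmin K i G \<omega> \<le> 0}"
  define Q where "Q = {\<omega> \<in> space M. q \<omega>}"
  have Pe: "P = (\<Inter>k\<in>?I. {\<omega> \<in> space M. G k \<omega> > 0}) \<inter> space M"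
    unfolding P_def Gmin_def using fin ne by auto
  have Se: "S = space M - P" unfolding S_def P_def by auto
  have Pm: "P \<in> sets M" unfolding Pe
    by (intro sets.Int sets.finite_INT fin ne) (use Gm in measurable)
  have Sm: "S \<in> sets M" unfolding Se using Pm by auto
  have Qm: "Q \<in> sets M" unfolding Q_def using assms(6) by measurable
  have EPSQ: "eventE M K i G q = P \<union> (S \<inter> Q)"
    unfolding eventE_def P_def S_def Q_def by auto
  have probQ: "prob Q = 1 / L"
  proof -
    have "measure (distr M (count_space UNIV) q) {True} = prob (q -` {True} \<inter> space M)"
      using assms(6) by (intro measure_distr) auto
    moreover have "q -` {True} \<inter> space M = Q" unfolding Q_def by auto
    moreover have "measure (measure_pmf (bernoulli_pmf (1 / L))) {True} = 1 / L"
      using assms(5) by (simp add: measure_pmf_single)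
    ultimately show ?thesis using assms(7) by simp
  qed
  have part1: "expectation (\<lambda>\<omega>. G j \<omega> * indicator (eventE M K i G q) \<omega>)
            = (1 - 1 / L) * expectation (\<lambda>\<omega>. G j \<omega> * indicator P \<omega>)
              + 1 / L * expectation (G j)" if j: "j \<in> ?I" for j
  proof -
    define X where "X = (\<lambda>\<omega>. G j \<omega> * indicator S \<omega>)"
    define Y where "Y = (\<lambda>\<omega>. indicator Q \<omega> :: real)"
    define R where "R = (\<lambda>\<omega>. restrict (\<lambda>k. G k \<omega>) ?I)"
    define T where "T = (\<Union>k\<in>?I. {x \<in> space (PiM ?I (\<lambda>_. borel)). x k \<le> (0::real)})"
    define f where "f = (\<lambda>x. x j * indicator T x :: real)"
    have Tm: "T \<in> sets (PiM ?I (\<lambda>_. borel))" unfolding T_def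
      by (intro sets.finite_UN fin) measurable
    have fm: "f \<in> borel_measurable (PiM ?I (\<lambda>_. borel))" unfolding f_def
      using j Tm by measurable
    have Rsp: "R \<omega> \<in> space (PiM ?I (\<lambda>_. borel))" for \<omega> unfolding R_def by (simp add: space_PiM)
    have XfR: "X \<omega> = f (R \<omega>)" if "\<omega> \<in> space M" for \<omega>
    proof -
      have "(\<omega> \<in> S) = (R \<omega> \<in> T)"
        using that fin ne Rsp[of \<omega>] unfolding S_def T_def Gmin_def R_def
        by (auto simp: Min_le_iff)
      thus ?thesis unfolding X_def f_def using j by (simp add: R_def indicator_def)
    qed
    have intGj: "integrable M (G j)" using assms(4) j by auto
    have intX: "integrable M X" unfolding X_def using integrable_mult_indicator[OF Sm intGj] by (simp add: mult.commute)
    have intY: "integrable M Y" 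
    proof -
      have c: "integrable M (\<lambda>_. 1::real)" by simp
      show ?thesis unfolding Y_def using integrable_mult_indicator[OF Qm c] by simp
    qed
    have ind: "indep_var borel X borel Y"
      unfolding indep_var_def indep_vars_def2
    proof (intro conjI ballI)
      fix b :: bool show "random_variable (case_bool borel borel b) (case_bool X Y b)"
        using intX intY by (cases b) auto
    next
      show "indep_sets (\<lambda>b. {case_bool X Y b -` A \<inter> space M |A. A \<in> sets (case_bool borel borel b)}) UNIV"
      proof (rule indep_sets_mono_sets[OF assms(8)[unfolded indep_set_def]])
        fix b :: bool assume "b \<in> UNIV"
        show "{case_bool X Y b -` A \<inter> space M |A. A \<in> sets (case_bool borel borel b)} \<subseteq>
          case_bool {(\<lambda>\<omega>. restrict (\<lambda>j. G j \<omega>) (idx K i)) -` A \<inter> space M | A. A \<in> sets (PiM (idx K i) (\<lambda>_. borel))}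
           {q -` B \<inter> space M | B. B \<in> sets (count_space UNIV)} b"
        proof (rule subsetI)
          fix s assume s0: "s \<in> {case_bool X Y b -` A \<inter> space M |A. A \<in> sets (case_bool borel borel b)}"
          show "s \<in> case_bool {(\<lambda>\<omega>. restrict (\<lambda>j. G j \<omega>) (idx K i)) -` A \<inter> space M | A. A \<in> sets (PiM (idx K i) (\<lambda>_. borel))}
           {q -` B \<inter> space M | B. B \<in> sets (count_space UNIV)} b"
          proof (cases b)
            case True
            then obtain A where s: "s = X -` A \<inter> space M" and A: "A \<in> sets (borel :: real measure)"
              using s0 by auto
            have "s = R -` (f -` A \<inter> space (PiM ?I (\<lambda>_. borel))) \<inter> space M"
              unfolding s using XfR Rsp by auto
            moreover have "f -` A \<inter> space (PiM ?I (\<lambda>_. borel)) \<in> sets (PiM ?I (\<lambda>_. borel))"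
              using fm A by (rule measurable_sets)
            ultimately have "s \<in> {R -` A' \<inter> space M | A'. A' \<in> sets (PiM ?I (\<lambda>_. borel))}"
              by blast
            thus ?thesis using True unfolding R_def by simp
          next
            case False
            then obtain A where s: "s = Y -` A \<inter> space M" and A: "A \<in> sets (borel :: real measure)"
              using s0 by auto
            have "s = q -` {b. (if b then 1 else 0::real) \<in> A} \<inter> space M"
              unfolding s Y_def Q_def by (auto simp: indicator_def)
            thus ?thesis using False by auto
          qed
        qed
      qed
    qed
    have XY: "expectation (\<lambda>\<omega>. X \<omega> * Y \<omega>) = expectation X * (1 / L)"
      using indep_var_lebesgue_integral[OF ind intX intY] probQ
      unfolding Y_def using Qm by simp
    have intP: "integrable M (\<lambda>\<omega>. G j \<omega> * indicator P \<omega>)" using integrable_mult_indicator[OF Pm intGj] by (simp add: mult.commute)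
    have intXY: "integrable M (\<lambda>\<omega>. X \<omega> * Y \<omega>)" using indep_var_integrable[OF ind intX intY] .
    have e1: "expectation (\<lambda>\<omega>. G j \<omega> * indicator (eventE M K i G q) \<omega>)
        = expectation (\<lambda>\<omega>. G j \<omega> * indicator P \<omega> + X \<omega> * Y \<omega>)"
      unfolding EPSQ X_def Y_def
      by (intro Bochner_Integration.integral_cong refl) (auto simp: indicator_def Se)
    also have "\<dots> = expectation (\<lambda>\<omega>. G j \<omega> * indicator P \<omega>) + expectation X * (1 / L)"
      using intP intXY XY by simp
    finally have e1': "expectation (\<lambda>\<omega>. G j \<omega> * indicator (eventE M K i G q) \<omega>) =
       expectation (\<lambda>\<omega>. G j \<omega> * indicator P \<omega>) + expectation X * (1 / L)" .
    have "expectation (G j) = expectation (\<lambda>\<omega>. G j \<omega> * indicator P \<omega> + X \<omega>)"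
      unfolding X_def
      by (intro Bochner_Integration.integral_cong refl) (auto simp: indicator_def Se)
    also have "\<dots> = expectation (\<lambda>\<omega>. G j \<omega> * indicator P \<omega>) + expectation X"
      using intP intX by simp
    finally have e2: "expectation (G j) = expectation (\<lambda>\<omega>. G j \<omega> * indicator P \<omega>) + expectation X" .
    show ?thesis unfolding e1' using e2 by (simp add: algebra_simps)
  qed
  show ?thesis
  proof (intro conjI ballI allI impI)
    fix j assume "j \<in> ?I"
    thus "expectation (\<lambda>\<omega>. G j \<omega> * indicator (eventE M K i G q) \<omega>)
            = (1 - 1 / L) * expectation (\<lambda>\<omega>. G j \<omega> * indicator {\<omega> \<in> space M. Gmin K i G \<omega> > 0} \<omega>)
              + 1 / L * expectation (G j)" using part1 P_def by simp
  next
    fix \<epsilon> \<tau> \<rho> :: real and j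
    assume H: "0 \<le> \<epsilon> \<and> \<epsilon> < 1 \<and> \<tau> > 0 \<and> \<rho> > 0
            \<and> measure M {\<omega> \<in> space M. Gmin K i G \<omega> \<ge> \<tau>} \<ge> \<rho>
            \<and> (\<forall>j \<in> idx K i. expectation (G j) \<ge> -1)
            \<and> L \<ge> 1 + (1 - \<epsilon>) / (\<tau> * \<rho> + \<epsilon>)" and j: "j \<in> ?I"
    define W where "W = {\<omega> \<in> space M. Gmin K i G \<omega> \<ge> \<tau>}"
    have We: "W = (\<Inter>k\<in>?I. {\<omega> \<in> space M. G k \<omega> \<ge> \<tau>}) \<inter> space M"
      unfolding W_def Gmin_def using fin ne by auto
    have Wm: "W \<in> sets M" unfolding We
      by (intro sets.Int sets.finite_INT fin ne) (use Gm in measurable)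
    have intGj: "integrable M (G j)" using assms(4) j by auto
    have intP: "integrable M (\<lambda>\<omega>. G j \<omega> * indicator P \<omega>)" using integrable_mult_indicator[OF Pm intGj] by (simp add: mult.commute)
    have intW: "integrable M (\<lambda>\<omega>. \<tau> * indicator W \<omega>)"
    proof -
      have c: "integrable M (\<lambda>_. \<tau>)" by simp
      show ?thesis using integrable_mult_indicator[OF Wm c] by (simp add: mult.commute)
    qed
    have "expectation (\<lambda>\<omega>. \<tau> * indicator W \<omega>) \<le> expectation (\<lambda>\<omega>. G j \<omega> * indicator P \<omega>)"
    proof (rule integral_mono[OF intW intP])
      fix \<omega> assume \<omega>: "\<omega> \<in> space M"
      have le: "Gmin K i G \<omega> \<le> G j \<omega>" unfolding Gmin_def using fin j by auto
      show "\<tau> * indicator W \<omega> \<le> G j \<omega> * indicator P \<omega>"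
        using le H \<omega> unfolding W_def P_def by (auto simp: indicator_def)
    qed
    moreover have "expectation (\<lambda>\<omega>. \<tau> * indicator W \<omega>) = \<tau> * prob W"
      using Wm by simp
    moreover have "\<tau> * \<rho> \<le> \<tau> * prob W" using H unfolding W_def by (intro mult_left_mono) auto
    ultimately have A: "\<tau> * \<rho> \<le> expectation (\<lambda>\<omega>. G j \<omega> * indicator P \<omega>)"
      by linarith
    have B: "expectation (G j) \<ge> -1" using H j by auto
    have pos: "\<tau> * \<rho> + \<epsilon> > 0" using H by (simp add: add_pos_nonneg)
    have "\<tau> * \<rho> + 1 = (1 + (1 - \<epsilon>) / (\<tau> * \<rho> + \<epsilon>)) * (\<tau> * \<rho> + \<epsilon>)"
      using pos by (simp add: field_simps)
    also have "\<dots> \<le> L * (\<tau> * \<rho> + \<epsilon>)"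
      using H pos by (intro mult_right_mono) auto
    finally have C: "L * (\<tau> * \<rho> + \<epsilon>) \<ge> \<tau> * \<rho> + 1" .
    have L1: "1 - 1 / L \<ge> 0" using assms(5) by simp
    have "(1 - 1 / L) * expectation (\<lambda>\<omega>. G j \<omega> * indicator P \<omega>) + 1 / L * expectation (G j)
        \<ge> (1 - 1 / L) * (\<tau> * \<rho>) + 1 / L * (-1)"
      using A B L1 assms(5) by (intro add_mono mult_left_mono) auto
    moreover have "(1 - 1 / L) * (\<tau> * \<rho>) + 1 / L * (-1) \<ge> - \<epsilon>"
    proof -
      have "(1 - 1 / L) * (\<tau> * \<rho>) + 1 / L * (-1) = (L * (\<tau> * \<rho>) - \<tau> * \<rho> - 1) / L"
        using assms(5) by (simp add: field_simps)
      also have "\<dots> \<ge> - \<epsilon>" using C assms(5) by (simp add: field_simps)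
      finally show ?thesis .
    qed
    ultimately show "expectation (\<lambda>\<omega>. G j \<omega> * indicator (eventE M K i G q) \<omega>) \<ge> - \<epsilon>"
      using part1[OF j] by linarith
  qed
qed

end
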